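(* Let $\mathcal{M}$ be a finite (or countable) set of models with target probability mass function $p(\cdot\mid\boldsymbol{y})$ on $\mathcal{M}$. Let $q_S(\mathcal{S}\mid\mathfrak{m})$ be a probability mass function over populations $\mathcal{S}$ given a model $\mathfrak{m}$, $q_o(\mathfrak{m}_k\mid\mathcal{S},\mathfrak{m})$ a probability mass function over models given a population and a model, and $q_r(\mathfrak{m}'\mid\mathcal{S},\mathfrak{m}_k)$ a probability mass function over models given a population and a model. Assume $\mathfrak{m}\sim p(\cdot\mid\boldsymbol{y})$ and that $(\mathcal{S}',\mathfrak{m}_k',\mathfrak{m}')$ is generated according to $q_S(\mathcal{S}'\mid\mathfrak{m})\,q_o(\mathfrak{m}_k'\mid\mathcal{S}',\mathfrak{m})\,q_r(\mathfrak{m}'\mid\mathcal{S}',\mathfrak{m}_k')$. Assume further that $(\mathcal{S},\mathfrak{m}_k)$ is generated according to $q_S(\mathcal{S}\mid\mathfrak{m}')\,q_o(\mathfrak{m}_k\mid\mathcal{S},\mathfrak{m}')$. Put \[ \mathfrak{m}^*=\begin{cases}\mathfrak{m}' & \text{with probability } \min\{1,a_{mh}\},\\ \mathfrak{m} & \text{otherwise,}\end{cases} \qquad a_{mh}=\frac{p(\mathfrak{m}'\mid\boldsymbol{y})\,q_r(\mathfrak{m}\mid\mathcal{S},\mathfrak{m}_k)}{p(\mathfrak{m}\mid\boldsymbol{y})\,q_r(\mathfrak{m}'\mid\mathcal{S}',\mathfrak{m}_k')}. \] Then $\mathfrak{m}^*\sim p(\cdot\mid\boldsymbol{y})$.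
   Context: This is the reversible genetically modified mode jumping MCMC (RGMJMCMC) step: from the current model $\mathfrak{m}$ a new population (search space of features) $\mathcal{S}'$ is proposed, a local MCMC/optimization within the models induced by $\mathcal{S}'$ yields $\mathfrak{m}_k'$, a randomization yields the proposal $\mathfrak{m}'$, and backward auxiliary variables $(\mathcal{S},\mathfrak{m}_k)$ are generated from $\mathfrak{m}'$. The target $p(\mathfrak{m}\mid\boldsymbol{y})$ is the posterior model probability. *)

theory Defs
  imports "HOL-Probability.Probability"
begin

text \<open>Models have type 'm (any type; the support of a pmf is countable),
populations have type 's.  The target is the pmf post (posterior p(.|y)).\<close>

definition a_mh :: "'m pmf \<Rightarrow> ('s \<Rightarrow> 'm \<Rightarrow> 'm pmf) \<Rightarrow> 'm \<Rightarrow> 's \<Rightarrow> 'm \<Rightarrow> 'm \<Rightarrow> 's \<Rightarrow> 'm \<Rightarrow> real" where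
  "a_mh post qr m S' mk' m' S mk =
     (pmf post m' * pmf (qr S mk) m) / (pmf post m * pmf (qr S' mk') m')"

definition rgmjmcmc_step ::
  "'m pmf \<Rightarrow> ('m \<Rightarrow> 's pmf) \<Rightarrow> ('s \<Rightarrow> 'm \<Rightarrow> 'm pmf) \<Rightarrow> ('s \<Rightarrow> 'm \<Rightarrow> 'm pmf) \<Rightarrow> 'm pmf" where
  "rgmjmcmc_step post qS qo qr =
     do { m \<leftarrow> post;
          S' \<leftarrow> qS m;
          mk' \<leftarrow> qo S' m;
          m' \<leftarrow> qr S' mk';
          S \<leftarrow> qS m';
          mk \<leftarrow> qo S m';
          b \<leftarrow> bernoulli_pmf (min 1 (a_mh post qr m S' mk' m' S mk));
          return_pmf (if b then m' else m) }"

end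

theory Submission
  imports Defs
begin
lemma balance:
  fixes J :: "'t pmf" and \<alpha> :: "'t \<Rightarrow> real" and \<sigma> :: "'t \<Rightarrow> 't" and A :: "'t \<Rightarrow> 'm"
  assumes inv: "\<And>t. \<sigma> (\<sigma> t) = t" and a0: "\<And>t. 0 \<le> \<alpha> t" and a1: "\<And>t. \<alpha> t \<le> 1"
    and db: "\<And>t. pmf J t * \<alpha> t = pmf J (\<sigma> t) * \<alpha> (\<sigma> t)"
  shows "bind_pmf J (\<lambda>t. bind_pmf (bernoulli_pmf (\<alpha> t)) (\<lambda>b. return_pmf (if b then A (\<sigma> t) else A t))) = map_pmf A J"
proof (rule pmf_eqI)
  fix x
  have bij: "bij_betw \<sigma> UNIV UNIV"
    by (metis bij_betw_def inj_def inv surj_def)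
  have inner: "pmf (bind_pmf (bernoulli_pmf (\<alpha> t)) (\<lambda>b. return_pmf (if b then A (\<sigma> t) else A t))) x
     = \<alpha> t * indicator {x} (A (\<sigma> t)) + (1 - \<alpha> t) * indicator {x} (A t)" for t
    using a0[of t] a1[of t] by (simp add: pmf_bind)
  define g where "g s = ennreal (pmf J s * \<alpha> s * indicator {x} (A s))" for s
  define h where "h s = ennreal (pmf J s * (1 - \<alpha> s) * indicator {x} (A s))" for s
  have "ennreal (pmf (bind_pmf J (\<lambda>t. bind_pmf (bernoulli_pmf (\<alpha> t)) (\<lambda>b. return_pmf (if b then A (\<sigma> t) else A t)))) x)
      = (\<integral>\<^sup>+ t. ennreal (pmf J t) * ennreal (\<alpha> t * indicator {x} (A (\<sigma> t)) + (1 - \<alpha> t) * indicator {x} (A t)) \<partial>count_space UNIV)"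
    by (simp add: ennreal_pmf_bind nn_integral_measure_pmf inner)
  also have "\<dots> = (\<integral>\<^sup>+ t. g (\<sigma> t) + h t \<partial>count_space UNIV)"
  proof (rule nn_integral_cong)
    fix t
    have "pmf J t * \<alpha> t * indicator {x} (A (\<sigma> t)) = pmf J (\<sigma> t) * \<alpha> (\<sigma> t) * indicator {x} (A (\<sigma> t))"
      using db[of t] by simp
    then show "ennreal (pmf J t) * ennreal (\<alpha> t * indicator {x} (A (\<sigma> t)) + (1 - \<alpha> t) * indicator {x} (A t)) = g (\<sigma> t) + h t"
    proof -
      have e: "pmf J t * (\<alpha> t * indicator {x} (A (\<sigma> t)) + (1 - \<alpha> t) * indicator {x} (A t))
         = pmf J (\<sigma> t) * \<alpha> (\<sigma> t) * indicator {x} (A (\<sigma> t)) + pmf J t * (1 - \<alpha> t) * indicator {x} (A t)"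
        using \<open>pmf J t * \<alpha> t * indicator {x} (A (\<sigma> t)) = _\<close> by (simp add: algebra_simps)
      have n1: "0 \<le> pmf J (\<sigma> t) * \<alpha> (\<sigma> t) * indicator {x} (A (\<sigma> t))" using a0 by simp
      have n2: "0 \<le> pmf J t * (1 - \<alpha> t) * indicator {x} (A t)" using a1[of t] by simp
      show ?thesis unfolding g_def h_def
        by (simp only: ennreal_mult'[symmetric] pmf_nonneg e ennreal_plus[OF n1 n2])
    qed
  qed
  also have "\<dots> = (\<integral>\<^sup>+ t. g (\<sigma> t) \<partial>count_space UNIV) + (\<integral>\<^sup>+ t. h t \<partial>count_space UNIV)"
    by (rule nn_integral_add) auto
  also have "\<dots> = (\<integral>\<^sup>+ t. g t \<partial>count_space UNIV) + (\<integral>\<^sup>+ t. h t \<partial>count_space UNIV)"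
    by (simp add: nn_integral_bij_count_space[OF bij])
  also have "\<dots> = (\<integral>\<^sup>+ t. g t + h t \<partial>count_space UNIV)"
    by (rule nn_integral_add[symmetric]) auto
  also have "\<dots> = (\<integral>\<^sup>+ t. ennreal (pmf J t) * ennreal (indicator {x} (A t)) \<partial>count_space UNIV)"
  proof (rule nn_integral_cong)
    fix t
    show "g t + h t = ennreal (pmf J t) * ennreal (indicator {x} (A t))"
    proof -
      have n1: "0 \<le> pmf J t * \<alpha> t * indicator {x} (A t)" using a0 by simp
      have n2: "0 \<le> pmf J t * (1 - \<alpha> t) * indicator {x} (A t)" using a1[of t] by simp
      have e: "pmf J t * \<alpha> t * indicator {x} (A t) + pmf J t * (1 - \<alpha> t) * indicator {x} (A t)
          = pmf J t * indicator {x} (A t)" by (simp add: algebra_simps)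
      show ?thesis unfolding g_def h_def
        by (simp only: ennreal_plus[OF n1 n2, symmetric] e ennreal_mult'[symmetric] pmf_nonneg)
    qed
  qed
  also have "\<dots> = ennreal (pmf (map_pmf A J) x)"
    by (simp add: map_pmf_def ennreal_pmf_bind nn_integral_measure_pmf)
  finally show "pmf (bind_pmf J (\<lambda>t. bind_pmf (bernoulli_pmf (\<alpha> t)) (\<lambda>b. return_pmf (if b then A (\<sigma> t) else A t)))) x = pmf (map_pmf A J) x"
    by simp
qed

lemma pmf_bind_proj:
  assumes "\<And>a z. z \<in> set_pmf (f a) \<Longrightarrow> p z = a"
  shows "pmf (bind_pmf M f) y = pmf M (p y) * pmf (f (p y)) y"
proof -
  have "(\<lambda>a. pmf (f a) y) = (\<lambda>a. indicator {p y} a * pmf (f (p y)) y)"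
  proof
    fix a show "pmf (f a) y = indicator {p y} a * pmf (f (p y)) y"
    proof (cases "a = p y")
      case False
      then have "y \<notin> set_pmf (f a)" using assms by blast
      then show ?thesis using False by (simp add: set_pmf_eq)
    qed simp
  qed
  then show ?thesis by (simp add: pmf_bind measure_pmf_single)
qed

definition jointJ :: "'m pmf \<Rightarrow> ('m \<Rightarrow> 's pmf) \<Rightarrow> ('s \<Rightarrow> 'm \<Rightarrow> 'm pmf) \<Rightarrow> ('s \<Rightarrow> 'm \<Rightarrow> 'm pmf) \<Rightarrow> ('m \<times> 's \<times> 'm \<times> 'm \<times> 's \<times> 'm) pmf" where
  "jointJ post qS qo qr =
     do { m \<leftarrow> post;
          S' \<leftarrow> qS m;
          mk' \<leftarrow> qo S' m;
          m' \<leftarrow> qr S' mk';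
          S \<leftarrow> qS m';
          mk \<leftarrow> qo S m';
          return_pmf (m, S', mk', m', S, mk) }"

lemma pmf_jointJ:
  "pmf (jointJ post qS qo qr) (m, S', mk', m', S, mk) =
     pmf post m * pmf (qS m) S' * pmf (qo S' m) mk' * pmf (qr S' mk') m' * pmf (qS m') S * pmf (qo S m') mk"
  unfolding jointJ_def
  apply (subst pmf_bind_proj[where p=fst], force)
  apply simp
  apply (subst pmf_bind_proj[where p="\<lambda>z. fst (snd z)"], force)
  apply simp
  apply (subst pmf_bind_proj[where p="\<lambda>z. fst (snd (snd z))"], force)
  apply simp
  apply (subst pmf_bind_proj[where p="\<lambda>z. fst (snd (snd (snd z)))"], force)
  apply simp
  apply (subst pmf_bind_proj[where p="\<lambda>z. fst (snd (snd (snd (snd z))))"], force)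
  apply simp
  apply (subst pmf_bind_proj[where p="\<lambda>z. snd (snd (snd (snd (snd z))))"], force)
  apply simp
  done

lemma min_aux: "(P::real) \<ge> 0 \<Longrightarrow> Q \<ge> 0 \<Longrightarrow> P * min 1 (Q / P) = min P Q"
  by (cases "P = 0") (auto simp: min_def field_simps)

theorem theorem2:
  fixes post :: "'m pmf"
    and qS :: "'m \<Rightarrow> 's pmf"
    and qo :: "'s \<Rightarrow> 'm \<Rightarrow> 'm pmf"
    and qr :: "'s \<Rightarrow> 'm \<Rightarrow> 'm pmf"
  shows "rgmjmcmc_step post qS qo qr = post"
proof -
  define \<sigma> :: "'m \<times> 's \<times> 'm \<times> 'm \<times> 's \<times> 'm \<Rightarrow> 'm \<times> 's \<times> 'm \<times> 'm \<times> 's \<times> 'm"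
    where "\<sigma> = (\<lambda>(m, S', mk', m', S, mk). (m', S, mk, m, S', mk'))"
  define \<alpha> :: "'m \<times> 's \<times> 'm \<times> 'm \<times> 's \<times> 'm \<Rightarrow> real"
    where "\<alpha> = (\<lambda>(m, S', mk', m', S, mk). min 1 (a_mh post qr m S' mk' m' S mk))"
  let ?J = "jointJ post qS qo qr"
  have step: "rgmjmcmc_step post qS qo qr =
     bind_pmf ?J (\<lambda>t. bind_pmf (bernoulli_pmf (\<alpha> t)) (\<lambda>b. return_pmf (if b then fst (\<sigma> t) else fst t)))"
    unfolding rgmjmcmc_step_def jointJ_def \<alpha>_def \<sigma>_def
    by (simp only: bind_assoc_pmf bind_return_pmf prod.case fst_conv)
  have a0: "0 \<le> \<alpha> t" for t
    unfolding \<alpha>_def a_mh_def by (auto split: prod.splits)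
  have a1: "\<alpha> t \<le> 1" for t
    unfolding \<alpha>_def by (auto split: prod.splits)
  have inv: "\<sigma> (\<sigma> t) = t" for t
    unfolding \<sigma>_def by (auto split: prod.splits)
  have db: "pmf ?J t * \<alpha> t = pmf ?J (\<sigma> t) * \<alpha> (\<sigma> t)" for t
  proof -
    obtain m S' mk' m' S mk where t: "t = (m, S', mk', m', S, mk)" by (cases t) auto
    define P where "P = pmf post m * pmf (qr S' mk') m'"
    define Q where "Q = pmf post m' * pmf (qr S mk) m"
    define C where "C = pmf (qS m) S' * pmf (qo S' m) mk' * pmf (qS m') S * pmf (qo S m') mk"
    have "pmf ?J t * \<alpha> t = C * (P * min 1 (Q / P))"
      unfolding t \<alpha>_def pmf_jointJ a_mh_def P_def Q_def C_def by (simp add: ac_simps)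
    also have "\<dots> = C * min P Q" by (simp add: min_aux P_def Q_def)
    also have "\<dots> = C * (Q * min 1 (P / Q))" by (simp add: min_aux P_def Q_def min.commute)
    also have "\<dots> = pmf ?J (\<sigma> t) * \<alpha> (\<sigma> t)"
      unfolding t \<sigma>_def \<alpha>_def a_mh_def P_def Q_def C_def by (simp add: pmf_jointJ ac_simps)
    finally show ?thesis .
  qed
  have "rgmjmcmc_step post qS qo qr = map_pmf fst ?J"
    unfolding step using balance[of \<sigma> \<alpha> ?J fst, OF inv a0 a1 db] by simp
  also have "\<dots> = post"
    unfolding jointJ_def by (simp add: map_bind_pmf bind_return_pmf' map_pmf_def[symmetric] bind_assoc_pmf bind_return_pmf pmf.map_comp o_def map_pmf_const bind_pmf_const)
  finally show ?thesis .
qed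

end
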